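(* Let $G$ be the directed graph with vertices $v_1,v_2,v_3,\dots$ and $w_2,w_3,\dots$ (all distinct), and edges $v_i\to v_{i+1}$ for $i\ge1$, $v_1\to w_2$, and $w_i\to w_{i+1}$ for $i\ge2$, with birthdates $t(v_i)=i$ and $t(w_i)=i$. (Writing $w_1=v_1$, $G$ consists of two infinite directed paths sharing only their initial vertex.) Then $(G,t)$ is an infinite biosphere, and $v_1$ does not belong to any maximal element of $\mathrm{IAP}\cap\mathrm{CONV}\cap\mathrm{CA}$ (i.e., there is no $S\in \mathrm{IAP}\cap\mathrm{CONV}\cap\mathrm{CA}$ with $v_1\in S$ such that no proper superset of $S$ lies in $\mathrm{IAP}\cap\mathrm{CONV}\cap\mathrm{CA}$).
   Context: An infinite biosphere is a directed graph $G$ together with a function $t$ assigning a real number $t(v)$ to each vertex, such that: (1) if $v$ is a parent of $w$ (edge from $v$ to $w$) then $t(v)<t(w)$; (2) for every $r\in\mathbb R$ at most finitely many vertices $v$ have $t(v)<r$; (3) every vertex has finitely many children; (4) $G$ is infinite. $v$ is an ancestor of $w$ (and $w$ a descendant of $v$) if there is a directed path $v=v_1,\dots,v_n=w$ with $n>1$. $\mathrm{IAP}$: sets $S$ of vertices such that no $v\in S$ has both infinitely many descendants in $S$ and infinitely many non-descendants in $S$. $\mathrm{CONV}$: sets $S$ such that every vertex having an ancestor in $S$ and a descendant in $S$ lies in $S$. $\mathrm{CA}$: sets $S$ for which there exists $v\in S$ such that every $w\in S$ with $w\neq v$ is a descendant of $v$. *)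

theory Defs
  imports Complex_Main
begin

text \<open>A directed graph is given by a vertex set Vs and an edge relation E
  (E v w means v is a parent of w); t is the birthdate function.\<close>

definition infinite_biosphere :: "'a set \<Rightarrow> ('a \<Rightarrow> 'a \<Rightarrow> bool) \<Rightarrow> ('a \<Rightarrow> real) \<Rightarrow> bool" where
  "infinite_biosphere Vs E t \<longleftrightarrow>
     (\<forall>v w. E v w \<longrightarrow> v \<in> Vs \<and> w \<in> Vs) \<and>
     (\<forall>v w. E v w \<longrightarrow> t v < t w) \<and>
     (\<forall>r::real. finite {v \<in> Vs. t v < r}) \<and>
     (\<forall>v \<in> Vs. finite {w. E v w}) \<and>
     infinite Vs"

definition ancestor :: "('a \<Rightarrow> 'a \<Rightarrow> bool) \<Rightarrow> 'a \<Rightarrow> 'a \<Rightarrow> bool" where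
  "ancestor E v w \<longleftrightarrow> (v, w) \<in> {(x, y). E x y}\<^sup>+"

definition descendants :: "('a \<Rightarrow> 'a \<Rightarrow> bool) \<Rightarrow> 'a \<Rightarrow> 'a set" where
  "descendants E v = {w. ancestor E v w}"

definition IAP :: "('a \<Rightarrow> 'a \<Rightarrow> bool) \<Rightarrow> 'a set \<Rightarrow> bool" where
  "IAP E S \<longleftrightarrow> \<not> (\<exists>v \<in> S. infinite (S \<inter> descendants E v) \<and> infinite (S - descendants E v))"

definition CONV :: "'a set \<Rightarrow> ('a \<Rightarrow> 'a \<Rightarrow> bool) \<Rightarrow> 'a set \<Rightarrow> bool" where
  "CONV Vs E S \<longleftrightarrow>
     (\<forall>u \<in> Vs. (\<exists>a \<in> S. ancestor E a u) \<and> (\<exists>d \<in> S. ancestor E u d) \<longrightarrow> u \<in> S)"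

definition CA :: "('a \<Rightarrow> 'a \<Rightarrow> bool) \<Rightarrow> 'a set \<Rightarrow> bool" where
  "CA E S \<longleftrightarrow> (\<exists>v \<in> S. \<forall>w \<in> S. w \<noteq> v \<longrightarrow> w \<in> descendants E v)"

definition IAP_CONV_CA :: "'a set \<Rightarrow> ('a \<Rightarrow> 'a \<Rightarrow> bool) \<Rightarrow> 'a set set" where
  "IAP_CONV_CA Vs E = {S. S \<subseteq> Vs \<and> IAP E S \<and> CONV Vs E S \<and> CA E S}"

definition maximal_in :: "'a set set \<Rightarrow> 'a set \<Rightarrow> bool" where
  "maximal_in F S \<longleftrightarrow> S \<in> F \<and> \<not> (\<exists>T \<in> F. S \<subset> T)"

datatype vert = V nat | W nat

definition exVs :: "vert set" where
  "exVs = {V i | i. i \<ge> 1} \<union> {W i | i. i \<ge> 2}"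

fun exE :: "vert \<Rightarrow> vert \<Rightarrow> bool" where
  "exE (V i) (V j) \<longleftrightarrow> i \<ge> 1 \<and> j = i + 1"
| "exE (V i) (W j) \<longleftrightarrow> i = 1 \<and> j = 2"
| "exE (W i) (W j) \<longleftrightarrow> i \<ge> 2 \<and> j = i + 1"
| "exE (W i) (V j) \<longleftrightarrow> False"

fun ext :: "vert \<Rightarrow> real" where
  "ext (V i) = real i"
| "ext (W i) = real i"

end

theory Submission
  imports Defs
begin

lemma anc_fwd:
  assumes "(x, y) \<in> {(x, y). exE x y}\<^sup>+"
  shows "(\<exists>i j. x = V i \<and> y = V j \<and> 1 \<le> i \<and> i < j) \<or> (\<exists>j. x = V 1 \<and> y = W j \<and> 2 \<le> j)
     \<or> (\<exists>i j. x = W i \<and> y = W j \<and> 2 \<le> i \<and> i < j)"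
  using assms
proof (induction rule: trancl_induct)
  case (base y)
  then show ?case by (cases x; cases y) auto
next
  case (step y z)
  then show ?case by (cases y; cases z) auto
qed

lemma ancV: "1 \<le> i \<Longrightarrow> ancestor exE (V i) (V (i + k + 1))"
proof (induction k)
  case 0 then show ?case unfolding ancestor_def by (intro r_into_trancl) auto
next
  case (Suc k)
  then show ?case unfolding ancestor_def
    using trancl_into_trancl[of "V i" "V (i+k+1)" "{(x, y). exE x y}" "V (i + Suc k + 1)"] by auto
qed

lemma ancW: "2 \<le> i \<Longrightarrow> ancestor exE (W i) (W (i + k + 1))"
proof (induction k)
  case 0 then show ?case unfolding ancestor_def by (intro r_into_trancl) auto
next
  case (Suc k)
  then show ?case unfolding ancestor_def
    using trancl_into_trancl[of "W i" "W (i+k+1)" "{(x, y). exE x y}" "W (i + Suc k + 1)"] by auto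
qed

lemma ancVW: "2 \<le> j \<Longrightarrow> ancestor exE (V 1) (W j)"
proof -
  assume j: "2 \<le> j"
  have e: "ancestor exE (V 1) (W 2)" unfolding ancestor_def by (intro r_into_trancl) auto
  show ?thesis
  proof (cases "j = 2")
    case True then show ?thesis using e by simp
  next
    case False
    then have "ancestor exE (W 2) (W (2 + (j - 3) + 1))" by (intro ancW) auto
    moreover have "2 + (j - 3) + 1 = j" using j False by auto
    ultimately show ?thesis using e unfolding ancestor_def by auto
  qed
qed

lemma anc_char: "ancestor exE x y \<longleftrightarrow>
   ((\<exists>i j. x = V i \<and> y = V j \<and> 1 \<le> i \<and> i < j) \<or> (\<exists>j. x = V 1 \<and> y = W j \<and> 2 \<le> j)
     \<or> (\<exists>i j. x = W i \<and> y = W j \<and> 2 \<le> i \<and> i < j))" (is "?lhs \<longleftrightarrow> ?rhs")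
proof
  assume "ancestor exE x y" then show "?rhs" using anc_fwd unfolding ancestor_def by blast
next
  assume "?rhs"
  then show "ancestor exE x y"
  proof (elim disjE exE conjE)
    fix i j assume "x = V i" "y = V j" "1 \<le> i" "i < j"
    then show ?thesis using ancV[of i "j - i - 1"] by auto
  next
    fix j assume "x = V 1" "y = W j" "2 \<le> j"
    then show ?thesis using ancVW by auto
  next
    fix i j assume "x = W i" "y = W j" "2 \<le> i" "i < j"
    then show ?thesis using ancW[of i "j - i - 1"] by auto
  qed
qed

lemma desc_char: "w \<in> descendants exE v \<longleftrightarrow> ancestor exE v w"
  unfolding descendants_def by simp


lemma IAP_insert:
  assumes "IAP E S" "finite (S \<inter> descendants E x)"
  shows "IAP E (insert x S)"
  unfolding IAP_def
proof
  assume "\<exists>v\<in>insert x S. infinite (insert x S \<inter> descendants E v) \<and> infinite (insert x S - descendants E v)"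
  then obtain v where v: "v \<in> insert x S" "infinite (insert x S \<inter> descendants E v)"
     "infinite (insert x S - descendants E v)" by blast
  have a: "insert x S \<inter> descendants E v \<subseteq> insert x (S \<inter> descendants E v)" by blast
  have b: "insert x S - descendants E v \<subseteq> insert x (S - descendants E v)" by blast
  show False
  proof (cases "v = x")
    case True
    then show ?thesis using v(2) a assms(2) by (meson finite_insert finite_subset)
  next
    case False
    then have "v \<in> S" using v(1) by auto
    moreover have "infinite (S \<inter> descendants E v)" using v(2) a by (meson finite_insert finite_subset)
    moreover have "infinite (S - descendants E v)" using v(3) b by (meson finite_insert finite_subset)
    ultimately show ?thesis using assms(1) unfolding IAP_def by blast
  qed
qed

lemma CA_ex: "V 1 \<in> T \<Longrightarrow> T \<subseteq> exVs \<Longrightarrow> CA exE T"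
  unfolding CA_def desc_char
proof (intro bexI[of _ "V 1"] ballI impI)
  fix w assume "T \<subseteq> exVs" "w \<in> T" "w \<noteq> V 1"
  then have "w \<in> exVs" by auto
  then show "ancestor exE (V 1) w" using \<open>w \<noteq> V 1\<close> unfolding anc_char exVs_def by auto
qed

lemma ext_exists:
  assumes SF: "S \<in> IAP_CONV_CA exVs exE" and V1: "V 1 \<in> S"
  shows "\<exists>T \<in> IAP_CONV_CA exVs exE. S \<subset> T"
proof -
  have Ssub: "S \<subseteq> exVs" and iap: "IAP exE S" and conv: "CONV exVs exE S"
    using SF unfolding IAP_CONV_CA_def by auto
  show ?thesis
  proof (cases "finite {i. V i \<in> S}")
    case True
    define a where "a = Max {i. V i \<in> S}"
    have aS: "V a \<in> S" using True V1 unfolding a_def by (metis (mono_tags) Max_in empty_iff mem_Collect_eq)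
    have ale: "V i \<in> S \<Longrightarrow> i \<le> a" for i using True unfolding a_def by auto
    have a1: "1 \<le> a" using ale V1 by auto
    define x where "x = V (a + 1)"
    have xS: "x \<notin> S" using ale unfolding x_def by fastforce
    have xV: "x \<in> exVs" unfolding x_def exVs_def by auto
    have Tsub: "insert x S \<subseteq> exVs" using Ssub xV by auto
    have fin: "S \<inter> descendants exE x = {}"
      using ale a1 unfolding x_def descendants_def anc_char by fastforce
    have convT: "CONV exVs exE (insert x S)"
      unfolding CONV_def
    proof (intro ballI impI)
      fix u assume u: "u \<in> exVs" "(\<exists>a\<in>insert x S. ancestor exE a u) \<and> (\<exists>d\<in>insert x S. ancestor exE u d)"
      then obtain a' d where a': "a' \<in> insert x S" "ancestor exE a' u" and d: "d \<in> insert x S" "ancestor exE u d" by blast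
      show "u \<in> insert x S"
      proof (cases "a' = x")
        case True
        then obtain k where k: "u = V k" "k > a + 1" using a1 a'(2) unfolding x_def anc_char by auto
        then obtain m where m: "d = V m" "m > k" using d(2) unfolding anc_char by auto
        then have "d \<noteq> x" using k unfolding x_def by auto
        then have "d \<in> S" using d(1) by auto
        then show ?thesis using ale m k by fastforce
      next
        case False
        then have a'S: "a' \<in> S" using a'(1) by auto
        show ?thesis
        proof (cases "d = x")
          case False
          then have "d \<in> S" using d(1) by auto
          then show ?thesis using conv u a'S a'(2) d(2) unfolding CONV_def by blast
        next
          case True
          then obtain k where k: "u = V k" "k < a + 1" using a1 d(2) unfolding x_def anc_char by auto
          show ?thesis
          proof (cases "k = a")
            case True then show ?thesis using aS k by auto
          next
            case False
            then have "ancestor exE u (V a)" using k a'(2) unfolding anc_char by auto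
            then show ?thesis using conv u a'S a'(2) aS unfolding CONV_def by blast
          qed
        qed
      qed
    qed
    have "insert x S \<in> IAP_CONV_CA exVs exE"
      unfolding IAP_CONV_CA_def using Tsub IAP_insert[OF iap] fin convT CA_ex[of "insert x S"] V1 by auto
    then show ?thesis using xS by blast
  next
    case False
    have Wfin: "finite {j. W j \<in> S}"
    proof (rule ccontr)
      assume Winf: "infinite {j. W j \<in> S}"
      obtain i where i: "i > 2" "V i \<in> S" using False unfolding finite_nat_set_iff_bounded_le by (metis (mono_tags) mem_Collect_eq not_le)
      have "V 2 \<in> exVs" unfolding exVs_def by auto
      moreover have "ancestor exE (V 1) (V 2)" "ancestor exE (V 2) (V i)" using i unfolding anc_char by auto
      ultimately have V2: "V 2 \<in> S" using conv V1 i unfolding CONV_def by blast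
      have "V ` {i. V i \<in> S \<and> i > 2} \<subseteq> S \<inter> descendants exE (V 2)"
        unfolding descendants_def anc_char by auto
      moreover have "infinite {i. V i \<in> S \<and> i > 2}"
      proof
        assume "finite {i. V i \<in> S \<and> i > 2}"
        then have "finite ({i. V i \<in> S \<and> i > 2} \<union> {..2})" by auto
        moreover have "{i. V i \<in> S} \<subseteq> {i. V i \<in> S \<and> i > 2} \<union> {..2}" by auto
        ultimately show False using False finite_subset by blast
      qed
      ultimately have i1: "infinite (S \<inter> descendants exE (V 2))"
        by (meson finite_imageD finite_subset inj_onI vert.inject(1))
      have "W ` {j. W j \<in> S} \<subseteq> S - descendants exE (V 2)"
        unfolding descendants_def anc_char by auto
      then have i2: "infinite (S - descendants exE (V 2))" using Winf
        by (meson finite_imageD finite_subset inj_onI vert.inject(2))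
      show False using iap V2 i1 i2 unfolding IAP_def by blast
    qed
    define b where "b = Max (insert 1 {j. W j \<in> S})"
    have ble: "W j \<in> S \<Longrightarrow> j \<le> b" for j using Wfin unfolding b_def by auto
    have b1: "1 \<le> b" using Wfin unfolding b_def by auto
    have bS: "b \<ge> 2 \<Longrightarrow> W b \<in> S"
    proof -
      assume "b \<ge> 2"
      have "b \<in> insert 1 {j. W j \<in> S}" using Wfin unfolding b_def by (intro Max_in) auto
      then show "W b \<in> S" using \<open>b \<ge> 2\<close> by auto
    qed
    define x where "x = W (b + 1)"
    have xS: "x \<notin> S" using ble unfolding x_def by fastforce
    have xV: "x \<in> exVs" unfolding x_def exVs_def using b1 by auto
    have Tsub: "insert x S \<subseteq> exVs" using Ssub xV by auto
    have fin: "S \<inter> descendants exE x = {}"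
      using ble unfolding x_def descendants_def anc_char by fastforce
    have convT: "CONV exVs exE (insert x S)"
      unfolding CONV_def
    proof (intro ballI impI)
      fix u assume u: "u \<in> exVs" "(\<exists>a\<in>insert x S. ancestor exE a u) \<and> (\<exists>d\<in>insert x S. ancestor exE u d)"
      then obtain a' d where a': "a' \<in> insert x S" "ancestor exE a' u" and d: "d \<in> insert x S" "ancestor exE u d" by blast
      show "u \<in> insert x S"
      proof (cases "a' = x")
        case True
        then obtain k where k: "u = W k" "k > b + 1" using b1 a'(2) unfolding x_def anc_char by auto
        then obtain m where m: "d = W m" "m > k" using d(2) unfolding anc_char by auto
        then have "d \<noteq> x" using k unfolding x_def by auto
        then have "d \<in> S" using d(1) by auto
        then show ?thesis using ble m k by fastforce
      next
        case False
        then have a'S: "a' \<in> S" using a'(1) by auto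
        show ?thesis
        proof (cases "d = x")
          case False
          then have "d \<in> S" using d(1) by auto
          then show ?thesis using conv u a'S a'(2) d(2) unfolding CONV_def by blast
        next
          case True
          then have "u = V 1 \<or> (\<exists>k. u = W k \<and> 2 \<le> k \<and> k < b + 1)"
            using b1 d(2) unfolding x_def anc_char by auto
          then show ?thesis
          proof (elim disjE exE conjE)
            assume "u = V 1" then show ?thesis using V1 by auto
          next
            fix k assume k: "u = W k" "2 \<le> k" "k < b + 1"
            show ?thesis
            proof (cases "k = b")
              case True then show ?thesis using bS k by auto
            next
              case False
              then have "ancestor exE u (W b)" using k unfolding anc_char by auto
              then show ?thesis using conv u a'S a'(2) bS k unfolding CONV_def by auto
            qed
          qed
        qed
      qed
    qed
    have "insert x S \<in> IAP_CONV_CA exVs exE"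
      unfolding IAP_CONV_CA_def using Tsub IAP_insert[OF iap] fin convT CA_ex[of "insert x S"] V1 by auto
    then show ?thesis using xS by blast
  qed
qed

lemma bio: "infinite_biosphere exVs exE ext"
  unfolding infinite_biosphere_def
proof (intro conjI allI impI ballI)
  fix v w assume "exE v w" then show "v \<in> exVs" "w \<in> exVs"
    unfolding exVs_def by (cases v; cases w; auto)+
next
  fix v w assume "exE v w" then show "ext v < ext w" by (cases v; cases w; auto)
next
  fix r :: real
  have "{v \<in> exVs. ext v < r} \<subseteq> V ` {..nat \<lceil>r\<rceil>} \<union> W ` {..nat \<lceil>r\<rceil>}"
  proof
    fix v assume "v \<in> {v \<in> exVs. ext v < r}"
    then have "ext v < r" by auto
    then show "v \<in> V ` {..nat \<lceil>r\<rceil>} \<union> W ` {..nat \<lceil>r\<rceil>}"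
    proof (cases v)
      case (V i) then have "real i < r" using \<open>ext v < r\<close> by simp
      then have "i \<le> nat \<lceil>r\<rceil>" by linarith
      then show ?thesis using V by auto
    next
      case (W i) then have "real i < r" using \<open>ext v < r\<close> by simp
      then have "i \<le> nat \<lceil>r\<rceil>" by linarith
      then show ?thesis using W by auto
    qed
  qed
  then show "finite {v \<in> exVs. ext v < r}" by (rule finite_subset) auto
next
  fix v assume "v \<in> exVs"
  show "finite {w. exE v w}"
  proof (cases v)
    case (V i)
    have "{w. exE v w} \<subseteq> {V (i+1), W 2}" using V by (auto elim: exE.elims)
    then show ?thesis by (rule finite_subset) auto
  next
    case (W i)
    have "{w. exE v w} \<subseteq> {W (i+1)}" using W by (auto elim: exE.elims)
    then show ?thesis by (rule finite_subset) auto
  qed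
next
  have "V ` {1..} \<subseteq> exVs" unfolding exVs_def by auto
  moreover have "infinite (V ` {1::nat..})"
    by (metis finite_imageD infinite_Ici inj_onI vert.inject(1))
  ultimately show "infinite exVs" using finite_subset by blast
qed

theorem mainTheorem10:
  shows "infinite_biosphere exVs exE ext \<and>
         \<not> (\<exists>S. V 1 \<in> S \<and> maximal_in (IAP_CONV_CA exVs exE) S)"
  using bio ext_exists unfolding maximal_in_def by blast

end
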